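(* Let $f\in E^{\nu}_{p,q}$ with $p\ge1$, $q\ge2$, written in the corresponding coordinates $x=(\xi,\eta,x_n)$ as $f=x_n^4+2(|\xi|^2-3|\eta|^2)x_n^2+8\xi^\top A_\eta\xi\, x_n+\theta(\xi,\eta)$, and let $\theta_3$ be the part of $\theta$ that is homogeneous of degree $3$ in $\xi$ and degree $1$ in $\eta$. Then $\Delta_\xi\theta_3=0$, where $\Delta_\xi$ is the Laplacian in the $\xi$-variables.
   Context: $f$ is a real homogeneous quartic on $\mathbb{R}^n$ with $|\nabla_x f|^2=16|x|^6$. We say $f\in E^{\nu}_{p,q}$ if there are orthonormal coordinates $x=(\xi,\eta,x_n)$, $\xi\in\mathbb{R}^p$, $\eta\in\mathbb{R}^q$, $p+q=n-1$, in which $f(x)=x_n^4+2(|\xi|^2-3|\eta|^2)x_n^2+8\psi(\xi,\eta)x_n+\theta(\xi,\eta)$ with $\theta$ a homogeneous quartic, $\psi(\xi,\eta)=\xi^\top A_\eta\xi$ where $A_\eta=\sum_{i=1}^q\eta_iA_i$ for symmetric $A_i\in\mathbb{R}^{p\times p}$, and for every $\eta\ne0$ the matrix $A_\eta$ is similar to $|\eta|\,\mathrm{diag}(\mathbf{1}_\nu,-\mathbf{1}_\nu,\mathbf{0}_{p-2\nu})$. *)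

theory Defs
  imports "HOL-Analysis.Analysis"
begin

definition similar_matrix :: "real^'n^'n \<Rightarrow> real^'n^'n \<Rightarrow> bool" where
  "similar_matrix A B \<longleftrightarrow> (\<exists>P. invertible P \<and> A = matrix_inv P ** B ** P)"

definition diagonal_matrix :: "real^'n^'n \<Rightarrow> bool" where
  "diagonal_matrix D \<longleftrightarrow> (\<forall>i j. i \<noteq> j \<longrightarrow> D $ i $ j = 0)"

definition A_eta :: "('q::finite \<Rightarrow> real^'p^'p) \<Rightarrow> real^'q \<Rightarrow> real^'p^'p" where
  "A_eta A \<eta> = (\<Sum>i\<in>UNIV. (\<eta> $ i) *\<^sub>R A i)"

definition joint :: "real^'p \<Rightarrow> real^'q \<Rightarrow> ('p + 'q) \<Rightarrow> real" where
  "joint \<xi> \<eta> a = (case a of Inl i \<Rightarrow> \<xi> $ i | Inr j \<Rightarrow> \<eta> $ j)"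

text \<open>A general homogeneous quartic form on R^p x R^q, given by a coefficient tensor.\<close>
definition quartic_form ::
  "(('p::finite + 'q::finite) \<Rightarrow> ('p + 'q) \<Rightarrow> ('p + 'q) \<Rightarrow> ('p + 'q) \<Rightarrow> real)
   \<Rightarrow> real^'p \<Rightarrow> real^'q \<Rightarrow> real" where
  "quartic_form C \<xi> \<eta> = (\<Sum>a\<in>UNIV. \<Sum>b\<in>UNIV. \<Sum>c\<in>UNIV. \<Sum>d\<in>UNIV.
      C a b c d * joint \<xi> \<eta> a * joint \<xi> \<eta> b * joint \<xi> \<eta> c * joint \<xi> \<eta> d)"

definition n_eta :: "('p + 'q) list \<Rightarrow> nat" where
  "n_eta xs = length (filter (\<lambda>a. \<not> isl a) xs)"

definition part31 ::
  "(('p::finite + 'q::finite) \<Rightarrow> ('p + 'q) \<Rightarrow> ('p + 'q) \<Rightarrow> ('p + 'q) \<Rightarrow> real)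
   \<Rightarrow> real^'p \<Rightarrow> real^'q \<Rightarrow> real" where
  "part31 C \<xi> \<eta> = (\<Sum>a\<in>UNIV. \<Sum>b\<in>UNIV. \<Sum>c\<in>UNIV. \<Sum>d\<in>UNIV.
      (if n_eta [a, b, c, d] = 1 then
        C a b c d * joint \<xi> \<eta> a * joint \<xi> \<eta> b * joint \<xi> \<eta> c * joint \<xi> \<eta> d
       else 0))"

definition laplacian :: "(real^'p::finite \<Rightarrow> real) \<Rightarrow> real^'p \<Rightarrow> real" where
  "laplacian g \<xi> = (\<Sum>i\<in>UNIV. deriv (deriv (\<lambda>r. g (\<xi> + r *\<^sub>R axis i 1))) 0)"

end

theory Submission
  imports Defs
begin



definition th :: "(('p::finite + 'q::finite) \<Rightarrow> ('p + 'q) \<Rightarrow> ('p + 'q) \<Rightarrow> ('p + 'q) \<Rightarrow> real)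
   \<Rightarrow> nat \<Rightarrow> real^'p \<Rightarrow> real^'q \<Rightarrow> real" where
  "th C k \<xi> \<eta> = (\<Sum>a\<in>UNIV. \<Sum>b\<in>UNIV. \<Sum>c\<in>UNIV. \<Sum>d\<in>UNIV.
      (if n_eta [a, b, c, d] = k then
        C a b c d * joint \<xi> \<eta> a * joint \<xi> \<eta> b * joint \<xi> \<eta> c * joint \<xi> \<eta> d
       else 0))"

definition dQt :: "(('p::finite + 'q::finite) \<Rightarrow> ('p + 'q) \<Rightarrow> ('p + 'q) \<Rightarrow> ('p + 'q) \<Rightarrow> real)
   \<Rightarrow> real^'p \<Rightarrow> real^'q \<Rightarrow> real^'p \<Rightarrow> real^'q \<Rightarrow> ('p + 'q) \<Rightarrow> ('p + 'q) \<Rightarrow> ('p + 'q) \<Rightarrow> ('p + 'q) \<Rightarrow> real" where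
  "dQt C \<xi> \<eta> h g a b c d = C a b c d *
     (joint h g a * joint \<xi> \<eta> b * joint \<xi> \<eta> c * joint \<xi> \<eta> d
    + joint \<xi> \<eta> a * joint h g b * joint \<xi> \<eta> c * joint \<xi> \<eta> d
    + joint \<xi> \<eta> a * joint \<xi> \<eta> b * joint h g c * joint \<xi> \<eta> d
    + joint \<xi> \<eta> a * joint \<xi> \<eta> b * joint \<xi> \<eta> c * joint h g d)"

definition dQ where
  "dQ C \<xi> \<eta> h g = (\<Sum>a\<in>UNIV. \<Sum>b\<in>UNIV. \<Sum>c\<in>UNIV. \<Sum>d\<in>UNIV. dQt C \<xi> \<eta> h g a b c d)"

definition dth where
  "dth C k \<xi> \<eta> h g = (\<Sum>a\<in>UNIV. \<Sum>b\<in>UNIV. \<Sum>c\<in>UNIV. \<Sum>d\<in>UNIV.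
      (if n_eta [a, b, c, d] = k then dQt C \<xi> \<eta> h g a b c d else 0))"

lemma joint_line: "joint (\<xi> + s *\<^sub>R h) (\<eta> + s *\<^sub>R g) a = joint \<xi> \<eta> a + s * joint h g a"
  by (cases a) (auto simp: joint_def)

lemma Q_deriv:
  "((\<lambda>s. quartic_form C (\<xi> + s *\<^sub>R h) (\<eta> + s *\<^sub>R g)) has_real_derivative dQ C \<xi> \<eta> h g) (at 0)"
  unfolding quartic_form_def dQ_def joint_line
  apply (intro DERIV_sum)
  apply (rule derivative_eq_intros refl | simp)+
  apply (simp add: dQt_def algebra_simps)
  done




lemma dQt_scale_x:
  "dQt C \<xi> (\<mu> *\<^sub>R \<eta>) h 0 a b c d =
     (if n_eta [a,b,c,d] = 0 then dQt C \<xi> \<eta> h 0 a b c d else 0)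
   + \<mu> * (if n_eta [a,b,c,d] = 1 then dQt C \<xi> \<eta> h 0 a b c d else 0)
   + \<mu>^2 * (if n_eta [a,b,c,d] = 2 then dQt C \<xi> \<eta> h 0 a b c d else 0)
   + \<mu>^3 * (if n_eta [a,b,c,d] = 3 then dQt C \<xi> \<eta> h 0 a b c d else 0)"
  by (cases a; cases b; cases c; cases d) (simp_all add: dQt_def joint_def n_eta_def algebra_simps power2_eq_square power3_eq_cube)

lemma dQt_scale_y:
  "dQt C \<xi> (\<mu> *\<^sub>R \<eta>) 0 g a b c d =
     (if n_eta [a,b,c,d] = 1 then dQt C \<xi> \<eta> 0 g a b c d else 0)
   + \<mu> * (if n_eta [a,b,c,d] = 2 then dQt C \<xi> \<eta> 0 g a b c d else 0)
   + \<mu>^2 * (if n_eta [a,b,c,d] = 3 then dQt C \<xi> \<eta> 0 g a b c d else 0)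
   + \<mu>^3 * (if n_eta [a,b,c,d] = 4 then dQt C \<xi> \<eta> 0 g a b c d else 0)"
  by (cases a; cases b; cases c; cases d) (simp_all add: dQt_def joint_def n_eta_def algebra_simps power2_eq_square power3_eq_cube)

lemma dQ_scale_x:
  "dQ C \<xi> (\<mu> *\<^sub>R \<eta>) h 0 = dth C 0 \<xi> \<eta> h 0 + \<mu> * dth C 1 \<xi> \<eta> h 0
     + \<mu>^2 * dth C 2 \<xi> \<eta> h 0 + \<mu>^3 * dth C 3 \<xi> \<eta> h 0"
  unfolding dQ_def dth_def dQt_scale_x
  by (simp add: sum.distrib sum_distrib_left)

lemma dQ_scale_y:
  "dQ C \<xi> (\<mu> *\<^sub>R \<eta>) 0 g = dth C 1 \<xi> \<eta> 0 g + \<mu> * dth C 2 \<xi> \<eta> 0 g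
     + \<mu>^2 * dth C 3 \<xi> \<eta> 0 g + \<mu>^3 * dth C 4 \<xi> \<eta> 0 g"
  unfolding dQ_def dth_def dQt_scale_y
  by (simp add: sum.distrib sum_distrib_left)

lemma swap4:
  fixes F :: "'i \<Rightarrow> 'a \<Rightarrow> 'a \<Rightarrow> 'a \<Rightarrow> 'a \<Rightarrow> real"
  shows "(\<Sum>i\<in>I. w i * (\<Sum>a\<in>X. \<Sum>b\<in>X. \<Sum>c\<in>X. \<Sum>d\<in>X. F i a b c d))
     = (\<Sum>a\<in>X. \<Sum>b\<in>X. \<Sum>c\<in>X. \<Sum>d\<in>X. \<Sum>i\<in>I. w i * F i a b c d)"
  by (simp add: sum_distrib_left sum.swap[of _ I])

lemma sum_joint_x: "(\<Sum>i\<in>UNIV. \<xi> $ i * joint (axis i 1) (0::real^'q) a) = joint \<xi> (0::real^'q) a"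
  by (cases a) (simp_all add: joint_def axis_def if_distrib[of "(*) _"] sum.delta cong: if_cong)

lemma sum_joint_y: "(\<Sum>i\<in>UNIV. \<eta> $ i * joint (0::real^'p) (axis i 1) a) = joint (0::real^'p) \<eta> a"
  by (cases a) (simp_all add: joint_def axis_def if_distrib[of "(*) _"] sum.delta cong: if_cong)

lemma lin4:
  fixes H :: "'i \<Rightarrow> 'a \<Rightarrow> real"
  shows "(\<Sum>i\<in>I. w i * (K * (H i a * X1 + H i b * X2 + H i c * X3 + H i d * X4)))
   = K * ((\<Sum>i\<in>I. w i * H i a) * X1 + (\<Sum>i\<in>I. w i * H i b) * X2
        + (\<Sum>i\<in>I. w i * H i c) * X3 + (\<Sum>i\<in>I. w i * H i d) * X4)"
  unfolding sum_distrib_right sum_distrib_left sum.distrib[symmetric]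
  by (rule sum.cong) (auto simp: algebra_simps)

lemma dQt_alt: "dQt C \<xi> \<eta> h g a b c d = C a b c d *
     (joint h g a * (joint \<xi> \<eta> b * joint \<xi> \<eta> c * joint \<xi> \<eta> d)
    + joint h g b * (joint \<xi> \<eta> a * joint \<xi> \<eta> c * joint \<xi> \<eta> d)
    + joint h g c * (joint \<xi> \<eta> a * joint \<xi> \<eta> b * joint \<xi> \<eta> d)
    + joint h g d * (joint \<xi> \<eta> a * joint \<xi> \<eta> b * joint \<xi> \<eta> c))"
  unfolding dQt_def by (simp add: algebra_simps)

lemma euler_x_term:
  "(\<Sum>i\<in>UNIV. \<xi> $ i * (if n_eta [a,b,c,d] = k then dQt C \<xi> \<eta> (axis i 1) 0 a b c d else 0))
   = (if n_eta [a,b,c,d] = k then (4 - real k) * (C a b c d * joint \<xi> \<eta> a * joint \<xi> \<eta> b * joint \<xi> \<eta> c * joint \<xi> \<eta> d) else 0)"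
proof -
  have "(\<Sum>i\<in>UNIV. \<xi> $ i * dQt C \<xi> \<eta> (axis i 1) 0 a b c d) = dQt C \<xi> \<eta> \<xi> 0 a b c d"
    unfolding dQt_alt lin4[where H="\<lambda>i x. joint (axis i 1) 0 x"] sum_joint_x ..
  moreover have "n_eta [a,b,c,d] = k \<Longrightarrow> dQt C \<xi> \<eta> \<xi> 0 a b c d = (4 - real k) * (C a b c d * joint \<xi> \<eta> a * joint \<xi> \<eta> b * joint \<xi> \<eta> c * joint \<xi> \<eta> d)"
    by (cases a; cases b; cases c; cases d) (auto simp: dQt_def joint_def n_eta_def algebra_simps)
  ultimately show ?thesis by auto
qed

lemma euler_y_term:
  "(\<Sum>i\<in>UNIV. \<eta> $ i * (if n_eta [a,b,c,d] = k then dQt C \<xi> \<eta> 0 (axis i 1) a b c d else 0))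
   = (if n_eta [a,b,c,d] = k then real k * (C a b c d * joint \<xi> \<eta> a * joint \<xi> \<eta> b * joint \<xi> \<eta> c * joint \<xi> \<eta> d) else 0)"
proof -
  have "(\<Sum>i\<in>UNIV. \<eta> $ i * dQt C \<xi> \<eta> 0 (axis i 1) a b c d) = dQt C \<xi> \<eta> 0 \<eta> a b c d"
    unfolding dQt_alt lin4[where H="\<lambda>i x. joint 0 (axis i 1) x"] sum_joint_y ..
  moreover have "n_eta [a,b,c,d] = k \<Longrightarrow> dQt C \<xi> \<eta> 0 \<eta> a b c d = real k * (C a b c d * joint \<xi> \<eta> a * joint \<xi> \<eta> b * joint \<xi> \<eta> c * joint \<xi> \<eta> d)"
    by (cases a; cases b; cases c; cases d) (auto simp: dQt_def joint_def n_eta_def algebra_simps)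
  ultimately show ?thesis by auto
qed

lemma euler_x: "(\<Sum>i\<in>UNIV. \<xi> $ i * dth C k \<xi> \<eta> (axis i 1) 0) = (4 - real k) * th C k \<xi> \<eta>"
  unfolding dth_def swap4 euler_x_term th_def
  by (simp add: sum_distrib_left if_distrib cong: if_cong)

lemma euler_y: "(\<Sum>i\<in>UNIV. \<eta> $ i * dth C k \<xi> \<eta> 0 (axis i 1)) = real k * th C k \<xi> \<eta>"
  unfolding dth_def swap4 euler_y_term th_def
  by (simp add: sum_distrib_left if_distrib cong: if_cong)




lemma scaleR_mat_vec: "((c::real) *\<^sub>R (M::real^'n^'m)) *v x = c *\<^sub>R (M *v x)"
  by (simp add: matrix_vector_mult_def vec_eq_iff sum_distrib_left mult.assoc)

lemma A_eta_add: "A_eta A (\<eta> + g) = A_eta A \<eta> + A_eta A g"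
  by (simp add: A_eta_def scaleR_add_left sum.distrib)

lemma A_eta_scale: "A_eta A (c *\<^sub>R \<eta>) = c *\<^sub>R A_eta A \<eta>"
  by (simp add: A_eta_def scaleR_sum_right)

lemma A_eta_axis: "A_eta A (axis j 1) = A j"
  by (simp add: A_eta_def axis_def if_distrib[of "\<lambda>x. x *\<^sub>R _"] sum.delta cong: if_cong)

lemma A_eta_zero: "A_eta A 0 = 0"
  by (simp add: A_eta_def)

definition fF where
  "fF A C = (\<lambda>(\<xi>, \<eta>, t). t ^ 4 + 2 * (norm \<xi> ^ 2 - 3 * norm \<eta> ^ 2) * t ^ 2
                 + 8 * (\<xi> \<bullet> (A_eta A \<eta> *v \<xi>)) * t + quartic_form C \<xi> \<eta>)"

lemma fF_line:
  "((\<lambda>s. fF A C ((\<xi>, \<eta>, t) + s *\<^sub>R (h1, h2, \<tau>))) has_real_derivative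
     4 * t^3 * \<tau> + (4 * (\<xi> \<bullet> h1) - 12 * (\<eta> \<bullet> h2)) * t^2
     + 4 * (norm \<xi> ^ 2 - 3 * norm \<eta> ^ 2) * t * \<tau>
     + 8 * (h1 \<bullet> (A_eta A \<eta> *v \<xi>) + \<xi> \<bullet> (A_eta A \<eta> *v h1) + \<xi> \<bullet> (A_eta A h2 *v \<xi>)) * t
     + 8 * (\<xi> \<bullet> (A_eta A \<eta> *v \<xi>)) * \<tau> + dQ C \<xi> \<eta> h1 h2) (at 0)"
proof -
  define M where "M = A_eta A \<eta>"
  define M2 where "M2 = A_eta A h2"
  have n1: "\<And>s. norm (\<xi> + s *\<^sub>R h1) ^ 2 = \<xi> \<bullet> \<xi> + 2 * s * (\<xi> \<bullet> h1) + s^2 * (h1 \<bullet> h1)"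
    by (simp only: power2_norm_eq_inner) (simp add: inner_add inner_commute algebra_simps power2_eq_square)
  have n2: "\<And>s. norm (\<eta> + s *\<^sub>R h2) ^ 2 = \<eta> \<bullet> \<eta> + 2 * s * (\<eta> \<bullet> h2) + s^2 * (h2 \<bullet> h2)"
    by (simp only: power2_norm_eq_inner) (simp add: inner_add inner_commute algebra_simps power2_eq_square)
  have p: "\<And>s. (\<xi> + s *\<^sub>R h1) \<bullet> (A_eta A (\<eta> + s *\<^sub>R h2) *v (\<xi> + s *\<^sub>R h1))
     = \<xi> \<bullet> (M *v \<xi>) + s * (h1 \<bullet> (M *v \<xi>) + \<xi> \<bullet> (M *v h1) + \<xi> \<bullet> (M2 *v \<xi>))
       + s^2 * (h1 \<bullet> (M *v h1) + h1 \<bullet> (M2 *v \<xi>) + \<xi> \<bullet> (M2 *v h1)) + s^3 * (h1 \<bullet> (M2 *v h1))"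
    by (simp add: M_def M2_def A_eta_add A_eta_scale scaleR_mat_vec matrix_vector_right_distrib
          matrix_vector_mult_add_rdistrib matrix_vector_mult_scaleR inner_add algebra_simps
          power2_eq_square power3_eq_cube)
  have eq: "(\<lambda>s. fF A C ((\<xi>, \<eta>, t) + s *\<^sub>R (h1, h2, \<tau>))) = (\<lambda>s.
     (t + s * \<tau>) ^ 4 + 2 * ((\<xi> \<bullet> \<xi> + 2 * s * (\<xi> \<bullet> h1) + s^2 * (h1 \<bullet> h1))
        - 3 * (\<eta> \<bullet> \<eta> + 2 * s * (\<eta> \<bullet> h2) + s^2 * (h2 \<bullet> h2))) * (t + s * \<tau>) ^ 2
     + 8 * (\<xi> \<bullet> (M *v \<xi>) + s * (h1 \<bullet> (M *v \<xi>) + \<xi> \<bullet> (M *v h1) + \<xi> \<bullet> (M2 *v \<xi>))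
       + s^2 * (h1 \<bullet> (M *v h1) + h1 \<bullet> (M2 *v \<xi>) + \<xi> \<bullet> (M2 *v h1)) + s^3 * (h1 \<bullet> (M2 *v h1)))
       * (t + s * \<tau>) + quartic_form C (\<xi> + s *\<^sub>R h1) (\<eta> + s *\<^sub>R h2))"
    by (rule ext) (simp add: fF_def n1 n2 p)
  show ?thesis unfolding eq
    apply (rule derivative_eq_intros Q_deriv refl | simp)+
    apply (simp add: M_def M2_def dot_square_norm algebra_simps power2_eq_square power3_eq_cube)
    done
qed




lemma A_eta_symm:
  assumes symm: "\<forall>i. transpose (A i) = A i"
  shows "transpose (A_eta A \<eta>) = A_eta A \<eta>"
proof -
  have "\<And>i j k. A i $ j $ k = A i $ k $ j"
    using symm by (metis transpose_def vec_lambda_beta)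
  then show ?thesis
    by (simp add: A_eta_def transpose_def vec_eq_iff)
qed

lemma symm_inner:
  assumes "transpose M = (M::real^'n^'n)"
  shows "x \<bullet> (M *v y) = y \<bullet> (M *v x)"
proof -
  have "x \<bullet> (M *v y) = (x v* M) \<bullet> y" by (simp add: dot_lmul_matrix)
  also have "x v* M = transpose M *v x" by simp
  finally show ?thesis using assms by (simp add: inner_commute)
qed

lemma dQ_zero: "dQ C \<xi> \<eta> 0 0 = 0"
proof -
  have j0: "joint (0::real^'p) (0::real^'q) a = 0" for a by (cases a) (auto simp: joint_def)
  show ?thesis by (simp add: dQ_def dQt_def j0)
qed

lemma line_deriv:
  assumes "(f has_derivative (\<lambda>h. g \<bullet> h)) (at x)"
  shows "((\<lambda>s. f (x + s *\<^sub>R h)) has_real_derivative (g \<bullet> h)) (at 0)"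
proof -
  have d1: "((\<lambda>s::real. x + s *\<^sub>R h) has_derivative (\<lambda>s. s *\<^sub>R h)) (at 0)"
    by (intro derivative_eq_intros) auto
  have d2: "(f has_derivative (\<lambda>h. g \<bullet> h)) (at ((\<lambda>s::real. x + s *\<^sub>R h) 0))"
    using assms by simp
  have "((f \<circ> (\<lambda>s. x + s *\<^sub>R h)) has_derivative ((\<lambda>h. g \<bullet> h) \<circ> (\<lambda>s. s *\<^sub>R h))) (at 0)"
    by (rule diff_chain_at[OF d1 d2])
  moreover have "((\<lambda>h. g \<bullet> h) \<circ> (\<lambda>s. s *\<^sub>R h)) = (*) (g \<bullet> h)"
    by (auto simp: fun_eq_iff mult.commute)
  ultimately show ?thesis by (simp add: has_field_derivative_def o_def)
qed

lemma norm_triple_sq: "norm ((\<xi>::real^'p), (\<eta>::real^'q), (t::real)) ^ 2 = norm \<xi> ^ 2 + norm \<eta> ^ 2 + t ^ 2"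
  by (simp add: norm_Pair)

lemma norm_vec_sq: "norm (v::real^'n) ^ 2 = (\<Sum>i\<in>UNIV. (v $ i)^2)"
  unfolding power2_norm_eq_inner inner_vec_def by (simp add: power2_eq_square)

lemma eik_identity:
  assumes symm: "\<forall>i. transpose (A i) = A i"
    and eikonal: "\<forall>x. \<exists>g. (fF A C has_derivative (\<lambda>h. g \<bullet> h)) (at x)
                          \<and> norm g ^ 2 = 16 * norm x ^ 6"
  shows "(4 * t^3 + 4 * (norm \<xi> ^ 2 - 3 * norm \<eta> ^ 2) * t + 8 * (\<xi> \<bullet> (A_eta A \<eta> *v \<xi>)))^2
    + (\<Sum>i\<in>UNIV. (4 * \<xi> $ i * t^2 + 16 * t * (A_eta A \<eta> *v \<xi>) $ i + dQ C \<xi> \<eta> (axis i 1) 0)^2)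
    + (\<Sum>j\<in>UNIV. (-12 * \<eta> $ j * t^2 + 8 * t * (\<xi> \<bullet> (A j *v \<xi>)) + dQ C \<xi> \<eta> 0 (axis j 1))^2)
    = 16 * (norm \<xi> ^ 2 + norm \<eta> ^ 2 + t ^ 2) ^ 3"
proof -
  define x where "x = (\<xi>, \<eta>, t)"
  obtain g where gd: "(fF A C has_derivative (\<lambda>h. g \<bullet> h)) (at x)" and gn: "norm g ^ 2 = 16 * norm x ^ 6"
    using eikonal by blast
  obtain g1 g2 g3 where gg: "g = (g1, g2, g3)" by (cases g) auto
  have key: "g \<bullet> (h1, h2, \<tau>) = 4 * t^3 * \<tau> + (4 * (\<xi> \<bullet> h1) - 12 * (\<eta> \<bullet> h2)) * t^2
     + 4 * (norm \<xi> ^ 2 - 3 * norm \<eta> ^ 2) * t * \<tau>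
     + 8 * (h1 \<bullet> (A_eta A \<eta> *v \<xi>) + \<xi> \<bullet> (A_eta A \<eta> *v h1) + \<xi> \<bullet> (A_eta A h2 *v \<xi>)) * t
     + 8 * (\<xi> \<bullet> (A_eta A \<eta> *v \<xi>)) * \<tau> + dQ C \<xi> \<eta> h1 h2" for h1 h2 \<tau>
    using DERIV_unique[OF line_deriv[OF gd[unfolded x_def], of "(h1, h2, \<tau>)"] fF_line[of A C \<xi> \<eta> t h1 h2 \<tau>]]
    by (simp add: x_def)
  have sy: "\<xi> \<bullet> (A_eta A \<eta> *v axis i 1) = (A_eta A \<eta> *v \<xi>) $ i" for i
    using symm_inner[OF A_eta_symm[OF symm], of \<xi> \<eta> "axis i 1"]
    by (simp add: cart_eq_inner_axis inner_commute)
  have c1: "g1 $ i = 4 * \<xi> $ i * t^2 + 16 * t * (A_eta A \<eta> *v \<xi>) $ i + dQ C \<xi> \<eta> (axis i 1) 0" for i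
    using key[of "axis i 1" 0 0] sy[of i]
    by (simp add: gg inner_axis cart_eq_inner_axis[symmetric] A_eta_zero inner_commute[of "axis i 1"] algebra_simps)
  have c2: "g2 $ j = -12 * \<eta> $ j * t^2 + 8 * t * (\<xi> \<bullet> (A j *v \<xi>)) + dQ C \<xi> \<eta> 0 (axis j 1)" for j
    using key[of 0 "axis j 1" 0]
    by (simp add: gg inner_axis A_eta_axis algebra_simps)
  have c3: "g3 = 4 * t^3 + 4 * (norm \<xi> ^ 2 - 3 * norm \<eta> ^ 2) * t + 8 * (\<xi> \<bullet> (A_eta A \<eta> *v \<xi>))"
    using key[of 0 0 1] by (simp add: gg dQ_zero A_eta_zero)
  have "norm g ^ 2 = g3^2 + (\<Sum>i\<in>UNIV. (g1 $ i)^2) + (\<Sum>j\<in>UNIV. (g2 $ j)^2)"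
    by (simp add: gg norm_Pair norm_vec_sq sum_nonneg add_nonneg_nonneg)
  moreover have "norm x ^ 6 = (norm \<xi> ^ 2 + norm \<eta> ^ 2 + t ^ 2) ^ 3"
  proof -
    have "norm x ^ 6 = (norm x ^ 2) ^ 3" by (simp flip: power_mult)
    then show ?thesis using norm_triple_sq[of \<xi> \<eta> t] by (simp add: x_def)
  qed
  ultimately show ?thesis using gn c1 c2 c3 by simp
qed




lemma poly6_zero:
  fixes c0 c1 c2 c3 c4 c5 c6 :: real
  assumes "\<forall>x. c0 + c1 * x + c2 * x^2 + c3 * x^3 + c4 * x^4 + c5 * x^5 + c6 * x^6 = 0"
  shows "c0 = 0 \<and> c1 = 0 \<and> c2 = 0 \<and> c3 = 0 \<and> c4 = 0 \<and> c5 = 0 \<and> c6 = 0"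
proof -
  define c where "c = (\<lambda>i. [c0, c1, c2, c3, c4, c5, c6] ! i)"
  have "\<forall>x. (\<Sum>i\<le>6. c i * x^i) = 0"
    using assms by (simp add: c_def numeral_eq_Suc atMost_Suc algebra_simps)
  then have "\<forall>i\<le>6. c i = 0" using polyfun_eq_0 by blast
  then have "c 0 = 0" "c 1 = 0" "c 2 = 0" "c 3 = 0" "c 4 = 0" "c 5 = 0" "c 6 = 0" by auto
  then show ?thesis unfolding c_def by (simp_all add: numeral_eq_Suc)
qed

lemma sumsq_quad:
  fixes \<alpha> \<beta> \<gamma> :: "'i \<Rightarrow> real"
  shows "(\<Sum>i\<in>I. (\<alpha> i * t^2 + \<beta> i * t + \<gamma> i)^2)
   = (\<Sum>i\<in>I. \<gamma> i ^2) + t * (2 * (\<Sum>i\<in>I. \<beta> i * \<gamma> i))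
     + t^2 * ((\<Sum>i\<in>I. \<beta> i ^2) + 2 * (\<Sum>i\<in>I. \<alpha> i * \<gamma> i))
     + t^3 * (2 * (\<Sum>i\<in>I. \<alpha> i * \<beta> i)) + t^4 * (\<Sum>i\<in>I. \<alpha> i ^ 2)"
proof -
  have "\<And>i. (\<alpha> i * t^2 + \<beta> i * t + \<gamma> i)^2 = \<gamma> i ^2 + t * (2 * (\<beta> i * \<gamma> i))
     + t^2 * (\<beta> i ^2 + 2 * (\<alpha> i * \<gamma> i)) + t^3 * (2 * (\<alpha> i * \<beta> i)) + t^4 * (\<alpha> i ^ 2)"
    by (simp add: power2_eq_square power3_eq_cube power4_eq_xxxx algebra_simps)
  then show ?thesis by (simp add: sum.distrib sum_distrib_left distrib_left)
qed

lemma sumsq_cubic: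
  fixes p0 p1 p2 p3 :: "'i \<Rightarrow> real"
  shows "(\<Sum>i\<in>I. (p0 i + m * p1 i + m^2 * p2 i + m^3 * p3 i)^2)
   = (\<Sum>i\<in>I. p0 i ^2) + m * (2 * (\<Sum>i\<in>I. p0 i * p1 i))
     + m^2 * ((\<Sum>i\<in>I. p1 i ^2) + 2 * (\<Sum>i\<in>I. p0 i * p2 i))
     + m^3 * (2 * (\<Sum>i\<in>I. p0 i * p3 i) + 2 * (\<Sum>i\<in>I. p1 i * p2 i))
     + m^4 * ((\<Sum>i\<in>I. p2 i ^2) + 2 * (\<Sum>i\<in>I. p1 i * p3 i))
     + m^5 * (2 * (\<Sum>i\<in>I. p2 i * p3 i)) + m^6 * (\<Sum>i\<in>I. p3 i ^2)"
proof -
  have "\<And>i. (p0 i + m * p1 i + m^2 * p2 i + m^3 * p3 i)^2 = p0 i ^2 + m * (2 * (p0 i * p1 i))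
     + m^2 * (p1 i ^2 + 2 * (p0 i * p2 i))
     + m^3 * (2 * (p0 i * p3 i) + 2 * (p1 i * p2 i))
     + m^4 * (p2 i ^2 + 2 * (p1 i * p3 i))
     + m^5 * (2 * (p2 i * p3 i)) + m^6 * (p3 i ^2)"
    by (simp add: power2_eq_square power3_eq_cube algebra_simps eval_nat_numeral)
  then show ?thesis by (simp add: sum.distrib sum_distrib_left distrib_left)
qed

lemma sum_cubic:
  fixes w p0 p1 p2 p3 :: "'i \<Rightarrow> real"
  shows "(\<Sum>i\<in>I. w i * (p0 i + m * p1 i + m^2 * p2 i + m^3 * p3 i))
   = (\<Sum>i\<in>I. w i * p0 i) + m * (\<Sum>i\<in>I. w i * p1 i) + m^2 * (\<Sum>i\<in>I. w i * p2 i)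
     + m^3 * (\<Sum>i\<in>I. w i * p3 i)"
  by (simp add: sum.distrib sum_distrib_left algebra_simps)




lemma extract_coeffs:
  fixes A :: "'q::finite \<Rightarrow> real^'p::finite^'p"
    and C :: "('p + 'q) \<Rightarrow> ('p + 'q) \<Rightarrow> ('p + 'q) \<Rightarrow> ('p + 'q) \<Rightarrow> real"
    and \<xi> :: "real^'p" and \<eta> :: "real^'q"
  assumes H: "\<And>\<xi> \<eta> t. (4 * t^3 + 4 * (norm \<xi> ^ 2 - 3 * norm \<eta> ^ 2) * t + 8 * (\<xi> \<bullet> (A_eta A \<eta> *v \<xi>)))^2
    + (\<Sum>i\<in>UNIV. (4 * \<xi> $ i * t^2 + 16 * t * (A_eta A \<eta> *v \<xi>) $ i + dQ C \<xi> \<eta> (axis i 1) 0)^2)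
    + (\<Sum>j\<in>UNIV. (-12 * \<eta> $ j * t^2 + 8 * t * (\<xi> \<bullet> (A j *v \<xi>)) + dQ C \<xi> \<eta> 0 (axis j 1))^2)
    = 16 * (norm \<xi> ^ 2 + norm \<eta> ^ 2 + t ^ 2) ^ 3"
  defines "a \<equiv> \<lambda>k i. dth C k \<xi> \<eta> (axis i 1) 0"
    and "b \<equiv> \<lambda>k j. dth C k \<xi> \<eta> 0 (axis j 1)"
    and "X \<equiv> \<lambda>i. (A_eta A \<eta> *v \<xi>) $ i"
    and "\<omega> \<equiv> \<lambda>j. \<xi> \<bullet> (A j *v \<xi>)"
    and "s \<equiv> norm \<xi> ^ 2" and "r \<equiv> norm \<eta> ^ 2" and "\<psi> \<equiv> \<xi> \<bullet> (A_eta A \<eta> *v \<xi>)"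
  shows "th C 0 \<xi> \<eta> = s^2 - 2 * (\<Sum>j\<in>UNIV. \<omega> j ^ 2)"
    and "th C 2 \<xi> \<eta> = -6 * s * r + 8 * (\<Sum>i\<in>UNIV. X i ^ 2)"
    and "th C 3 \<xi> \<eta> = 0"
    and "32 * (\<Sum>i\<in>UNIV. X i * a 1 i) + 16 * (\<Sum>j\<in>UNIV. \<omega> j * b 3 j) = 0"
    and "64 * \<psi>^2 + (\<Sum>i\<in>UNIV. a 1 i ^2) + 2 * (\<Sum>i\<in>UNIV. a 0 i * a 2 i)
          + (\<Sum>j\<in>UNIV. b 2 j ^2) + 2 * (\<Sum>j\<in>UNIV. b 1 j * b 3 j) - 48 * s^2 * r = 0"
proof -
  define G where "G = (\<lambda>m i. a 0 i + m * a 1 i + m^2 * a 2 i + m^3 * a 3 i)"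
  define K where "K = (\<lambda>m j. b 1 j + m * b 2 j + m^2 * b 3 j + m^3 * b 4 j)"
  define V where "V = (\<Sum>i\<in>UNIV. X i ^ 2)"
  define W where "W = (\<Sum>j\<in>UNIV. \<omega> j ^ 2)"
  have phi: "\<forall>t. (64 * m^2 * \<psi>^2 + (\<Sum>i\<in>UNIV. G m i ^2) + (\<Sum>j\<in>UNIV. K m j ^2) - 16 * (s + m^2 * r)^3)
     + (2 * (4 * (s - 3 * (m^2 * r))) * (8 * (m * \<psi>)) + 2 * (\<Sum>i\<in>UNIV. (16 * m * X i) * G m i)
         + 2 * (\<Sum>j\<in>UNIV. (8 * \<omega> j) * K m j)) * t
     + ((4 * (s - 3 * (m^2 * r)))^2 + (\<Sum>i\<in>UNIV. (16 * m * X i)^2) + 2 * (\<Sum>i\<in>UNIV. (4 * \<xi> $ i) * G m i)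
         + (\<Sum>j\<in>UNIV. (8 * \<omega> j)^2) + 2 * (\<Sum>j\<in>UNIV. (-12 * m * \<eta> $ j) * K m j) - 48 * (s + m^2 * r)^2) * t^2
     + (8 * (8 * (m * \<psi>)) + 2 * (\<Sum>i\<in>UNIV. (4 * \<xi> $ i) * (16 * m * X i))
         + 2 * (\<Sum>j\<in>UNIV. (-12 * m * \<eta> $ j) * (8 * \<omega> j))) * t^3
     + (8 * (4 * (s - 3 * (m^2 * r))) + (\<Sum>i\<in>UNIV. (4 * \<xi> $ i)^2) + (\<Sum>j\<in>UNIV. (-12 * m * \<eta> $ j)^2)
         - 48 * (s + m^2 * r)) * t^4
     + 0 * t^5 + 0 * t^6 = 0" for m
  proof
    fix t
    have e: "(4 * t^3 + 4 * (s - 3 * (m^2 * r)) * t + 8 * (m * \<psi>))^2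
      + (\<Sum>i\<in>UNIV. ((4 * \<xi> $ i) * t^2 + (16 * m * X i) * t + G m i)^2)
      + (\<Sum>j\<in>UNIV. ((-12 * m * \<eta> $ j) * t^2 + (8 * \<omega> j) * t + K m j)^2)
      = 16 * (s + m^2 * r + t ^ 2) ^ 3"
    proof -
      have n: "norm (m *\<^sub>R \<eta>) ^ 2 = m^2 * r"
        by (simp add: r_def power_mult_distrib)
      have s1: "(\<Sum>i\<in>UNIV. (4 * \<xi> $ i * t^2 + 16 * t * (A_eta A (m *\<^sub>R \<eta>) *v \<xi>) $ i + dQ C \<xi> (m *\<^sub>R \<eta>) (axis i 1) 0)^2)
           = (\<Sum>i\<in>UNIV. ((4 * \<xi> $ i) * t^2 + (16 * m * X i) * t + G m i)^2)"
        by (rule sum.cong) (simp_all add: A_eta_scale scaleR_mat_vec dQ_scale_x G_def a_def X_def algebra_simps)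
      have s2: "(\<Sum>j\<in>UNIV. (-12 * (m *\<^sub>R \<eta>) $ j * t^2 + 8 * t * (\<xi> \<bullet> (A j *v \<xi>)) + dQ C \<xi> (m *\<^sub>R \<eta>) 0 (axis j 1))^2)
           = (\<Sum>j\<in>UNIV. ((-12 * m * \<eta> $ j) * t^2 + (8 * \<omega> j) * t + K m j)^2)"
        by (rule sum.cong) (simp_all add: dQ_scale_y K_def b_def \<omega>_def algebra_simps)
      have p: "\<xi> \<bullet> (A_eta A (m *\<^sub>R \<eta>) *v \<xi>) = m * \<psi>"
        by (simp add: A_eta_scale scaleR_mat_vec \<psi>_def)
      show ?thesis using H[where \<xi>=\<xi> and \<eta>="m *\<^sub>R \<eta>" and t=t] unfolding s1 s2 n p by (simp add: s_def)
    qed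
    show "(64 * m^2 * \<psi>^2 + (\<Sum>i\<in>UNIV. G m i ^2) + (\<Sum>j\<in>UNIV. K m j ^2) - 16 * (s + m^2 * r)^3)
     + (2 * (4 * (s - 3 * (m^2 * r))) * (8 * (m * \<psi>)) + 2 * (\<Sum>i\<in>UNIV. (16 * m * X i) * G m i)
         + 2 * (\<Sum>j\<in>UNIV. (8 * \<omega> j) * K m j)) * t
     + ((4 * (s - 3 * (m^2 * r)))^2 + (\<Sum>i\<in>UNIV. (16 * m * X i)^2) + 2 * (\<Sum>i\<in>UNIV. (4 * \<xi> $ i) * G m i)
         + (\<Sum>j\<in>UNIV. (8 * \<omega> j)^2) + 2 * (\<Sum>j\<in>UNIV. (-12 * m * \<eta> $ j) * K m j) - 48 * (s + m^2 * r)^2) * t^2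
     + (8 * (8 * (m * \<psi>)) + 2 * (\<Sum>i\<in>UNIV. (4 * \<xi> $ i) * (16 * m * X i))
         + 2 * (\<Sum>j\<in>UNIV. (-12 * m * \<eta> $ j) * (8 * \<omega> j))) * t^3
     + (8 * (4 * (s - 3 * (m^2 * r))) + (\<Sum>i\<in>UNIV. (4 * \<xi> $ i)^2) + (\<Sum>j\<in>UNIV. (-12 * m * \<eta> $ j)^2)
         - 48 * (s + m^2 * r)) * t^4
     + 0 * t^5 + 0 * t^6 = 0"
      using e unfolding sumsq_quad
      by (simp add: power2_eq_square power3_eq_cube power4_eq_xxxx algebra_simps eval_nat_numeral)
  qed
  note P = poly6_zero[OF phi]
  have sc: "\<And>(c::real) w p0 p1 p2 p3. (\<Sum>i\<in>UNIV. (c * w i) * (p0 i + m * p1 i + m^2 * p2 i + m^3 * p3 i))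
     = c * ((\<Sum>i\<in>UNIV. w i * p0 i) + m * (\<Sum>i\<in>UNIV. w i * p1 i) + m^2 * (\<Sum>i\<in>UNIV. w i * p2 i)
     + m^3 * (\<Sum>i\<in>UNIV. w i * p3 i))" for m
    by (simp only: mult.assoc sum_distrib_left[symmetric] sum_cubic)
  have ex: "(\<Sum>i\<in>UNIV. \<xi> $ i * a k i) = (4 - real k) * th C k \<xi> \<eta>" for k
    unfolding a_def by (rule euler_x)
  have ey: "(\<Sum>j\<in>UNIV. \<eta> $ j * b k j) = real k * th C k \<xi> \<eta>" for k
    unfolding b_def by (rule euler_y)
  have Q2: "\<forall>m. (32 * th C 0 \<xi> \<eta> - 32 * s^2 + 64 * W) + 0 * m
      + (-192 * s * r + 256 * V - 32 * th C 2 \<xi> \<eta>) * m^2 + (-64 * th C 3 \<xi> \<eta>) * m^3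
      + (96 * r^2 - 96 * th C 4 \<xi> \<eta>) * m^4 + 0 * m^5 + 0 * m^6 = 0"
  proof
    fix m
    have h1: "(\<Sum>i\<in>UNIV. (4 * \<xi> $ i) * G m i) = 4 * (4 * th C 0 \<xi> \<eta> + m * (3 * th C 1 \<xi> \<eta>)
        + m^2 * (2 * th C 2 \<xi> \<eta>) + m^3 * th C 3 \<xi> \<eta>)"
      unfolding G_def sc ex by simp
    have h2: "(\<Sum>j\<in>UNIV. (-12 * m * \<eta> $ j) * K m j) = (-12 * m) * (th C 1 \<xi> \<eta> + m * (2 * th C 2 \<xi> \<eta>)
        + m^2 * (3 * th C 3 \<xi> \<eta>) + m^3 * (4 * th C 4 \<xi> \<eta>))"
      unfolding K_def sc ey by simp
    have h3: "(\<Sum>i\<in>UNIV. (16 * m * X i)^2) = 256 * m^2 * V"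
      by (simp add: V_def sum_distrib_left power_mult_distrib)
    have h4: "(\<Sum>j\<in>UNIV. (8 * \<omega> j)^2) = 64 * W"
      by (simp add: W_def sum_distrib_left power_mult_distrib)
    from P[of m] have "(4 * (s - 3 * (m^2 * r)))^2 + (\<Sum>i\<in>UNIV. (16 * m * X i)^2) + 2 * (\<Sum>i\<in>UNIV. (4 * \<xi> $ i) * G m i)
         + (\<Sum>j\<in>UNIV. (8 * \<omega> j)^2) + 2 * (\<Sum>j\<in>UNIV. (-12 * m * \<eta> $ j) * K m j) - 48 * (s + m^2 * r)^2 = 0"
      by blast
    then show "(32 * th C 0 \<xi> \<eta> - 32 * s^2 + 64 * W) + 0 * m
      + (-192 * s * r + 256 * V - 32 * th C 2 \<xi> \<eta>) * m^2 + (-64 * th C 3 \<xi> \<eta>) * m^3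
      + (96 * r^2 - 96 * th C 4 \<xi> \<eta>) * m^4 + 0 * m^5 + 0 * m^6 = 0"
      unfolding h1 h2 h3 h4
      by (simp add: power2_eq_square power3_eq_cube power4_eq_xxxx algebra_simps)
  qed
  note R2 = poly6_zero[OF Q2]
  show "th C 0 \<xi> \<eta> = s^2 - 2 * (\<Sum>j\<in>UNIV. \<omega> j ^ 2)" using R2 by (simp add: W_def)
  show "th C 2 \<xi> \<eta> = -6 * s * r + 8 * (\<Sum>i\<in>UNIV. X i ^ 2)" using R2 by (simp add: V_def)
  show "th C 3 \<xi> \<eta> = 0" using R2 by simp
  have Q1: "\<forall>m. (16 * (\<Sum>j\<in>UNIV. \<omega> j * b 1 j))
      + (64 * s * \<psi> + 32 * (\<Sum>i\<in>UNIV. X i * a 0 i) + 16 * (\<Sum>j\<in>UNIV. \<omega> j * b 2 j)) * m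
      + (32 * (\<Sum>i\<in>UNIV. X i * a 1 i) + 16 * (\<Sum>j\<in>UNIV. \<omega> j * b 3 j)) * m^2
      + (-192 * r * \<psi> + 32 * (\<Sum>i\<in>UNIV. X i * a 2 i) + 16 * (\<Sum>j\<in>UNIV. \<omega> j * b 4 j)) * m^3
      + (32 * (\<Sum>i\<in>UNIV. X i * a 3 i)) * m^4 + 0 * m^5 + 0 * m^6 = 0"
  proof
    fix m
    have h1: "(\<Sum>i\<in>UNIV. (16 * m * X i) * G m i) = (16 * m) * ((\<Sum>i\<in>UNIV. X i * a 0 i) + m * (\<Sum>i\<in>UNIV. X i * a 1 i)
        + m^2 * (\<Sum>i\<in>UNIV. X i * a 2 i) + m^3 * (\<Sum>i\<in>UNIV. X i * a 3 i))"
      unfolding G_def sc by simp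
    have h2: "(\<Sum>j\<in>UNIV. (8 * \<omega> j) * K m j) = 8 * ((\<Sum>j\<in>UNIV. \<omega> j * b 1 j) + m * (\<Sum>j\<in>UNIV. \<omega> j * b 2 j)
        + m^2 * (\<Sum>j\<in>UNIV. \<omega> j * b 3 j) + m^3 * (\<Sum>j\<in>UNIV. \<omega> j * b 4 j))"
      unfolding K_def sc by simp
    from P[of m] have "2 * (4 * (s - 3 * (m^2 * r))) * (8 * (m * \<psi>)) + 2 * (\<Sum>i\<in>UNIV. (16 * m * X i) * G m i)
         + 2 * (\<Sum>j\<in>UNIV. (8 * \<omega> j) * K m j) = 0"
      by blast
    then show "(16 * (\<Sum>j\<in>UNIV. \<omega> j * b 1 j))
      + (64 * s * \<psi> + 32 * (\<Sum>i\<in>UNIV. X i * a 0 i) + 16 * (\<Sum>j\<in>UNIV. \<omega> j * b 2 j)) * m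
      + (32 * (\<Sum>i\<in>UNIV. X i * a 1 i) + 16 * (\<Sum>j\<in>UNIV. \<omega> j * b 3 j)) * m^2
      + (-192 * r * \<psi> + 32 * (\<Sum>i\<in>UNIV. X i * a 2 i) + 16 * (\<Sum>j\<in>UNIV. \<omega> j * b 4 j)) * m^3
      + (32 * (\<Sum>i\<in>UNIV. X i * a 3 i)) * m^4 + 0 * m^5 + 0 * m^6 = 0"
      unfolding h1 h2
      by (simp add: power2_eq_square power3_eq_cube power4_eq_xxxx algebra_simps)
  qed
  show "32 * (\<Sum>i\<in>UNIV. X i * a 1 i) + 16 * (\<Sum>j\<in>UNIV. \<omega> j * b 3 j) = 0"
    using poly6_zero[OF Q1] by simp
  have Q0: "\<forall>m. ((\<Sum>i\<in>UNIV. a 0 i ^2) + (\<Sum>j\<in>UNIV. b 1 j ^2) - 16 * s^3)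
      + (2 * (\<Sum>i\<in>UNIV. a 0 i * a 1 i) + 2 * (\<Sum>j\<in>UNIV. b 1 j * b 2 j)) * m
      + (64 * \<psi>^2 + (\<Sum>i\<in>UNIV. a 1 i ^2) + 2 * (\<Sum>i\<in>UNIV. a 0 i * a 2 i)
          + (\<Sum>j\<in>UNIV. b 2 j ^2) + 2 * (\<Sum>j\<in>UNIV. b 1 j * b 3 j) - 48 * s^2 * r) * m^2
      + (2 * (\<Sum>i\<in>UNIV. a 0 i * a 3 i) + 2 * (\<Sum>i\<in>UNIV. a 1 i * a 2 i)
          + 2 * (\<Sum>j\<in>UNIV. b 1 j * b 4 j) + 2 * (\<Sum>j\<in>UNIV. b 2 j * b 3 j)) * m^3
      + ((\<Sum>i\<in>UNIV. a 2 i ^2) + 2 * (\<Sum>i\<in>UNIV. a 1 i * a 3 i)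
          + (\<Sum>j\<in>UNIV. b 3 j ^2) + 2 * (\<Sum>j\<in>UNIV. b 2 j * b 4 j) - 48 * s * r^2) * m^4
      + (2 * (\<Sum>i\<in>UNIV. a 2 i * a 3 i) + 2 * (\<Sum>j\<in>UNIV. b 3 j * b 4 j)) * m^5
      + ((\<Sum>i\<in>UNIV. a 3 i ^2) + (\<Sum>j\<in>UNIV. b 4 j ^2) - 16 * r^3) * m^6 = 0"
  proof
    fix m
    from P[of m] have "64 * m^2 * \<psi>^2 + (\<Sum>i\<in>UNIV. G m i ^2) + (\<Sum>j\<in>UNIV. K m j ^2) - 16 * (s + m^2 * r)^3 = 0"
      by blast
    then show "((\<Sum>i\<in>UNIV. a 0 i ^2) + (\<Sum>j\<in>UNIV. b 1 j ^2) - 16 * s^3)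
      + (2 * (\<Sum>i\<in>UNIV. a 0 i * a 1 i) + 2 * (\<Sum>j\<in>UNIV. b 1 j * b 2 j)) * m
      + (64 * \<psi>^2 + (\<Sum>i\<in>UNIV. a 1 i ^2) + 2 * (\<Sum>i\<in>UNIV. a 0 i * a 2 i)
          + (\<Sum>j\<in>UNIV. b 2 j ^2) + 2 * (\<Sum>j\<in>UNIV. b 1 j * b 3 j) - 48 * s^2 * r) * m^2
      + (2 * (\<Sum>i\<in>UNIV. a 0 i * a 3 i) + 2 * (\<Sum>i\<in>UNIV. a 1 i * a 2 i)
          + 2 * (\<Sum>j\<in>UNIV. b 1 j * b 4 j) + 2 * (\<Sum>j\<in>UNIV. b 2 j * b 3 j)) * m^3
      + ((\<Sum>i\<in>UNIV. a 2 i ^2) + 2 * (\<Sum>i\<in>UNIV. a 1 i * a 3 i)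
          + (\<Sum>j\<in>UNIV. b 3 j ^2) + 2 * (\<Sum>j\<in>UNIV. b 2 j * b 4 j) - 48 * s * r^2) * m^4
      + (2 * (\<Sum>i\<in>UNIV. a 2 i * a 3 i) + 2 * (\<Sum>j\<in>UNIV. b 3 j * b 4 j)) * m^5
      + ((\<Sum>i\<in>UNIV. a 3 i ^2) + (\<Sum>j\<in>UNIV. b 4 j ^2) - 16 * r^3) * m^6 = 0"
      unfolding G_def K_def sumsq_cubic
      by (simp add: power2_eq_square power3_eq_cube power4_eq_xxxx algebra_simps eval_nat_numeral)
  qed
  show "64 * \<psi>^2 + (\<Sum>i\<in>UNIV. a 1 i ^2) + 2 * (\<Sum>i\<in>UNIV. a 0 i * a 2 i)
          + (\<Sum>j\<in>UNIV. b 2 j ^2) + 2 * (\<Sum>j\<in>UNIV. b 1 j * b 3 j) - 48 * s^2 * r = 0"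
    using poly6_zero[OF Q0] by simp
qed




lemma th_deriv:
  "((\<lambda>s. th C k (\<xi> + s *\<^sub>R h) (\<eta> + s *\<^sub>R g)) has_real_derivative dth C k \<xi> \<eta> h g) (at 0)"
  unfolding th_def dth_def joint_line
  apply (intro DERIV_sum)
  subgoal for a b c d
    by (cases "n_eta [a,b,c,d] = k")
       (auto intro!: derivative_eq_intros simp: dQt_def algebra_simps)
  done

lemma th_deriv_x:
  "((\<lambda>s. th C k (\<xi> + s *\<^sub>R h) \<eta>) has_real_derivative dth C k \<xi> \<eta> h 0) (at 0)"
  using th_deriv[of C k \<xi> h \<eta> 0] by simp

lemma th_deriv_y:
  "((\<lambda>s. th C k \<xi> (\<eta> + s *\<^sub>R g)) has_real_derivative dth C k \<xi> \<eta> 0 g) (at 0)"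
  using th_deriv[of C k \<xi> 0 \<eta> g] by simp

lemma inner_axis_line:
  "((x::real^'n) + c *\<^sub>R axis l 1) \<bullet> (x + c *\<^sub>R axis l 1) = x \<bullet> x + 2 * c * x $ l + c^2"
  by (simp add: inner_add inner_commute inner_axis algebra_simps power2_eq_square)

lemma key_kernel:
  fixes A :: "'q::finite \<Rightarrow> real^'p::finite^'p"
    and C :: "('p + 'q) \<Rightarrow> ('p + 'q) \<Rightarrow> ('p + 'q) \<Rightarrow> ('p + 'q) \<Rightarrow> real"
    and z :: "real^'p" and \<eta> :: "real^'q"
  assumes H: "\<And>\<xi> \<eta> t. (4 * t^3 + 4 * (norm \<xi> ^ 2 - 3 * norm \<eta> ^ 2) * t + 8 * (\<xi> \<bullet> (A_eta A \<eta> *v \<xi>)))^2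
    + (\<Sum>i\<in>UNIV. (4 * \<xi> $ i * t^2 + 16 * t * (A_eta A \<eta> *v \<xi>) $ i + dQ C \<xi> \<eta> (axis i 1) 0)^2)
    + (\<Sum>j\<in>UNIV. (-12 * \<eta> $ j * t^2 + 8 * t * (\<xi> \<bullet> (A j *v \<xi>)) + dQ C \<xi> \<eta> 0 (axis j 1))^2)
    = 16 * (norm \<xi> ^ 2 + norm \<eta> ^ 2 + t ^ 2) ^ 3"
    and Kz: "A_eta A \<eta> *v z = 0"
  shows "dth C 1 z \<eta> (axis i 1) 0 = 0"
proof -
  note E = extract_coeffs[OF H]
  define s where "s = norm z ^ 2"
  define r where "r = norm \<eta> ^ 2"
  define W where "W = (\<Sum>j\<in>UNIV. (z \<bullet> (A j *v z)) ^ 2)"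
  have th2: "\<And>\<xi> \<eta>. th C 2 \<xi> \<eta> = -6 * norm \<xi> ^ 2 * norm \<eta> ^ 2 + 8 * (\<Sum>i\<in>UNIV. ((A_eta A \<eta> *v \<xi>) $ i) ^ 2)"
    using E(2) by simp
  have th3: "\<And>\<xi> \<eta>. th C 3 \<xi> \<eta> = 0" using E(3) by simp
  have a2: "dth C 2 z \<eta> (axis l 1) 0 = -12 * r * z $ l" for l
  proof -
    define V where "V = (\<Sum>i\<in>UNIV. ((A_eta A \<eta> *v axis l 1) $ i) ^ 2)"
    have eq: "(\<lambda>s'. th C 2 (z + s' *\<^sub>R axis l 1) \<eta>) = (\<lambda>s'. -6 * (s + 2 * s' * z $ l + s'^2) * r + 8 * s'^2 * V)"
    proof
      fix s'
      have n: "norm (z + s' *\<^sub>R axis l 1) ^ 2 = s + 2 * s' * z $ l + s'^2"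
        unfolding s_def power2_norm_eq_inner inner_axis_line ..
      have m: "A_eta A \<eta> *v (z + s' *\<^sub>R axis l 1) = s' *\<^sub>R (A_eta A \<eta> *v axis l 1)"
        by (simp add: matrix_vector_right_distrib matrix_vector_mult_scaleR Kz)
      show "th C 2 (z + s' *\<^sub>R axis l 1) \<eta> = -6 * (s + 2 * s' * z $ l + s'^2) * r + 8 * s'^2 * V"
        unfolding th2 n m by (simp add: r_def V_def power_mult_distrib sum_distrib_left algebra_simps)
    qed
    have "((\<lambda>s'. -6 * (s + 2 * s' * z $ l + s'^2) * r + 8 * s'^2 * V) has_real_derivative -12 * r * z $ l) (at 0)"
      by (auto intro!: derivative_eq_intros)
    then show ?thesis using DERIV_unique th_deriv_x[of C 2 z "axis l 1" \<eta>] eq by metis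
  qed
  have b2: "dth C 2 z \<eta> 0 (axis j 1) = -12 * s * \<eta> $ j" for j
  proof -
    define V where "V = (\<Sum>i\<in>UNIV. ((A j *v z) $ i) ^ 2)"
    have eq: "(\<lambda>s'. th C 2 z (\<eta> + s' *\<^sub>R axis j 1)) = (\<lambda>s'. -6 * s * (r + 2 * s' * \<eta> $ j + s'^2) + 8 * s'^2 * V)"
    proof
      fix s'
      have n: "norm (\<eta> + s' *\<^sub>R axis j 1) ^ 2 = r + 2 * s' * \<eta> $ j + s'^2"
        unfolding r_def power2_norm_eq_inner inner_axis_line ..
      have m: "A_eta A (\<eta> + s' *\<^sub>R axis j 1) *v z = s' *\<^sub>R (A j *v z)"
        by (simp add: A_eta_add A_eta_scale A_eta_axis matrix_vector_mult_add_rdistrib scaleR_mat_vec Kz)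
      show "th C 2 z (\<eta> + s' *\<^sub>R axis j 1) = -6 * s * (r + 2 * s' * \<eta> $ j + s'^2) + 8 * s'^2 * V"
        unfolding th2 n m by (simp add: s_def V_def power_mult_distrib sum_distrib_left algebra_simps)
    qed
    have "((\<lambda>s'. -6 * s * (r + 2 * s' * \<eta> $ j + s'^2) + 8 * s'^2 * V) has_real_derivative -12 * s * \<eta> $ j) (at 0)"
      by (auto intro!: derivative_eq_intros)
    then show ?thesis using DERIV_unique th_deriv_y[of C 2 z \<eta> "axis j 1"] eq by metis
  qed
  have b3: "dth C 3 z \<eta> 0 (axis j 1) = 0" for j
  proof -
    have "((\<lambda>s'. th C 3 z (\<eta> + s' *\<^sub>R axis j 1)) has_real_derivative 0) (at 0)"
      unfolding th3 by (rule DERIV_const)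
    then show ?thesis using DERIV_unique th_deriv_y[of C 3 z \<eta> "axis j 1"] by metis
  qed
  have psi: "z \<bullet> (A_eta A \<eta> *v z) = 0" using Kz by simp
  have s02: "(\<Sum>l\<in>UNIV. dth C 0 z \<eta> (axis l 1) 0 * dth C 2 z \<eta> (axis l 1) 0) = -48 * r * (s^2 - 2 * W)"
  proof -
    have "(\<Sum>l\<in>UNIV. dth C 0 z \<eta> (axis l 1) 0 * dth C 2 z \<eta> (axis l 1) 0)
        = -12 * r * (\<Sum>l\<in>UNIV. z $ l * dth C 0 z \<eta> (axis l 1) 0)"
      by (simp add: a2 sum_distrib_left algebra_simps)
    also have "\<dots> = -12 * r * (4 * th C 0 z \<eta>)" by (simp add: euler_x)
    also have "th C 0 z \<eta> = s^2 - 2 * W" using E(1)[where \<xi>=z and \<eta>=\<eta>] by (simp add: s_def W_def)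
    finally show ?thesis by simp
  qed
  have sb2: "(\<Sum>j\<in>UNIV. (dth C 2 z \<eta> 0 (axis j 1))^2) = 144 * s^2 * r"
    by (simp add: b2 r_def power_mult_distrib sum_distrib_left norm_vec_sq)
  have main: "(\<Sum>l\<in>UNIV. (dth C 1 z \<eta> (axis l 1) 0)^2) = -192 * r * W"
    using E(5)[where \<xi>=z and \<eta>=\<eta>] s02 sb2 by (simp add: psi b3 s_def[symmetric] r_def[symmetric] algebra_simps)
  have "0 \<le> r * W" by (simp add: r_def W_def sum_nonneg)
  then have "(\<Sum>l\<in>UNIV. (dth C 1 z \<eta> (axis l 1) 0)^2) = 0"
  proof -
    have "0 \<le> (\<Sum>l\<in>UNIV. (dth C 1 z \<eta> (axis l 1) 0)^2)" by (simp add: sum_nonneg)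
    then show ?thesis using main \<open>0 \<le> r * W\<close> by linarith
  qed
  then show ?thesis by (simp add: sum_nonneg_eq_0_iff)
qed

lemma B_identity:
  fixes A :: "'q::finite \<Rightarrow> real^'p::finite^'p"
    and C :: "('p + 'q) \<Rightarrow> ('p + 'q) \<Rightarrow> ('p + 'q) \<Rightarrow> ('p + 'q) \<Rightarrow> real"
  assumes H: "\<And>\<xi> \<eta> t. (4 * t^3 + 4 * (norm \<xi> ^ 2 - 3 * norm \<eta> ^ 2) * t + 8 * (\<xi> \<bullet> (A_eta A \<eta> *v \<xi>)))^2
    + (\<Sum>i\<in>UNIV. (4 * \<xi> $ i * t^2 + 16 * t * (A_eta A \<eta> *v \<xi>) $ i + dQ C \<xi> \<eta> (axis i 1) 0)^2)
    + (\<Sum>j\<in>UNIV. (-12 * \<eta> $ j * t^2 + 8 * t * (\<xi> \<bullet> (A j *v \<xi>)) + dQ C \<xi> \<eta> 0 (axis j 1))^2)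
    = 16 * (norm \<xi> ^ 2 + norm \<eta> ^ 2 + t ^ 2) ^ 3"
  shows "(\<Sum>i\<in>UNIV. (A_eta A \<eta> *v \<xi>) $ i * dth C 1 \<xi> \<eta> (axis i 1) 0) = 0"
proof -
  note E = extract_coeffs[OF H]
  have th3: "\<And>\<xi> \<eta>. th C 3 \<xi> \<eta> = 0" using E(3) by simp
  have b3: "dth C 3 \<xi> \<eta> 0 (axis j 1) = 0" for j
  proof -
    have "((\<lambda>s'. th C 3 \<xi> (\<eta> + s' *\<^sub>R axis j 1)) has_real_derivative 0) (at 0)"
      unfolding th3 by (rule DERIV_const)
    then show ?thesis using DERIV_unique th_deriv_y[of C 3 \<xi> \<eta> "axis j 1"] by metis
  qed
  show ?thesis using E(4)[where \<xi>=\<xi> and \<eta>=\<eta>] by (simp add: b3)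
qed




locale trisym =
  fixes S :: "real^'n::finite \<Rightarrow> real^'n \<Rightarrow> real^'n \<Rightarrow> real"
  assumes lin1: "\<And>v w. linear (\<lambda>u. S u v w)"
    and sym12: "\<And>u v w. S u v w = S v u w"
    and sym23: "\<And>u v w. S u v w = S u w v"
begin

lemma add1: "S (u + u') v w = S u v w + S u' v w"
  using linear_add[OF lin1] by blast
lemma add2: "S u (v + v') w = S u v w + S u v' w"
  using add1 sym12 by metis
lemma add3: "S u v (w + w') = S u v w + S u v w'"
  using add2 sym23 by metis
lemma sc1: "S (c *\<^sub>R u) v w = c * S u v w"
  using linear_scale[OF lin1] by simp
lemma sc2: "S u (c *\<^sub>R v) w = c * S u v w"
  using sc1 sym12 by metis
lemma sc3: "S u v (c *\<^sub>R w) = c * S u v w"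
  using sc2 sym23 by metis
lemma lin2: "linear (\<lambda>v. S u v w)"
  by (rule linearI) (simp_all add: add2 sc2)
lemma neg1: "S (- u) v w = - S u v w"
  using sc1[of "-1"] by simp
lemma neg2: "S u (- v) w = - S u v w"
  using sc2[of _ "-1"] by simp
lemma zero1: "S 0 v w = 0"
  using sc1[of 0] by simp
lemma diff1: "S (u - u') v w = S u v w - S u' v w"
  using add1[of u "- u'"] neg1 by simp
lemma diff2: "S u (v - v') w = S u v w - S u v' w"
  using add2[of u v "- v'"] neg2 by simp

lemma diff3: "S u v (w - w') = S u v w - S u v w'"
  using diff2 sym23 by metis

lemma sum1: "S (\<Sum>i\<in>I. f i) v w = (\<Sum>i\<in>I. S (f i) v w)"
  using linear_sum[OF lin1] by blast
lemma sum2: "S u (\<Sum>i\<in>I. f i) w = (\<Sum>i\<in>I. S u (f i) w)"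
  using linear_sum[OF lin2] by blast

lemma polar:
  fixes B :: "real^'n^'n"
  assumes hB: "\<And>x. S (B *v x) x x = 0"
  shows "2 * S (B *v x) x y + S (B *v y) x x = 0"
proof -
  have a: "S (B *v (x + y)) (x + y) (x + y) = 0" by (rule hB)
  have b: "S (B *v (x - y)) (x - y) (x - y) = 0" by (rule hB)
  have c: "S (B *v y) y y = 0" by (rule hB)
  have a': "S (B *v (x + y)) (x + y) (x + y) = S (B *v x) x x + S (B *v x) x y + S (B *v x) y x + S (B *v x) y y
     + S (B *v y) x x + S (B *v y) x y + S (B *v y) y x + S (B *v y) y y"
    by (simp only: matrix_vector_right_distrib add1 add2 add3 add.assoc)
  have b': "S (B *v (x - y)) (x - y) (x - y) = S (B *v x) x x - S (B *v x) x y - S (B *v x) y x + S (B *v x) y y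
     - S (B *v y) x x + S (B *v y) x y + S (B *v y) y x - S (B *v y) y y"
    by (simp only: matrix_vector_mult_diff_distrib diff1 diff2 diff3)
  have s1: "S (B *v x) y x = S (B *v x) x y" by (rule sym23)
  have s2: "S (B *v y) y x = S (B *v y) x y" by (rule sym23)
  show ?thesis using a b c a' b' s1 s2 by linarith
qed

lemma eig_zero:
  fixes B :: "real^'n^'n"
  assumes hB: "\<And>x. S (B *v x) x x = 0"
    and cube: "\<And>x. B *v (B *v (B *v x)) = B *v x"
    and eig: "B *v u = c *\<^sub>R u" and c: "c = 1 \<or> c = -1"
  shows "S u u y = 0"
proof -
  define L where "L = (\<lambda>y. S u u y)"
  have r: "L (B *v y) = -2 * c * L y" for y
  proof -
    have "2 * S (B *v u) u y + S (B *v y) u u = 0" by (rule polar[OF hB])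
    then show ?thesis using c unfolding L_def eig sc1
      by (auto simp: sym12[of _ u u] sym23[of "B *v y" u u] sym12[of "B *v y" u] sym23[of u "B *v y"] algebra_simps)
  qed
  have "L (B *v (B *v (B *v y))) = -8 * c^3 * L y"
    by (simp add: r power3_eq_cube)
  then have "-2 * c * L y = -8 * c^3 * L y" using cube r by simp
  then have "L y = 0" using c by auto
  then show ?thesis by (simp add: L_def)
qed

lemma cross_zero:
  fixes P Q :: "real^'n^'n"
  assumes Qs: "transpose Q = Q" and PQ: "\<And>x. P *v (Q *v x) = 0"
  shows "(\<Sum>i\<in>UNIV. S (P *v axis i 1) (Q *v axis i 1) w) = 0"
proof -
  have be: "(\<Sum>i\<in>UNIV. (x$i) *\<^sub>R axis i 1) = (x::real^'n)" for x
    using basis_expansion[of x] by (simp add: scalar_mult_eq_scaleR)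
  have qc: "(Q *v axis i 1) $ l = (Q *v axis l 1) $ i" for i l
  proof -
    have "Q $ l $ i = Q $ i $ l" using Qs by (metis transpose_def vec_lambda_beta)
    then show ?thesis by (simp add: matrix_vector_mult_def axis_def if_distrib sum.delta cong: if_cong)
  qed
  have "(\<Sum>i\<in>UNIV. S (P *v axis i 1) (Q *v axis i 1) w)
      = (\<Sum>i\<in>UNIV. \<Sum>l\<in>UNIV. (Q *v axis l 1) $ i * S (P *v axis i 1) (axis l 1) w)"
  proof (rule sum.cong[OF refl])
    fix i
    have "S (P *v axis i 1) (Q *v axis i 1) w = S (P *v axis i 1) (\<Sum>l\<in>UNIV. ((Q *v axis i 1)$l) *\<^sub>R axis l 1) w"
      by (simp only: be)
    also have "\<dots> = (\<Sum>l\<in>UNIV. (Q *v axis l 1) $ i * S (P *v axis i 1) (axis l 1) w)"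
      by (simp add: sum2 sc2 qc)
    finally show "S (P *v axis i 1) (Q *v axis i 1) w = (\<Sum>l\<in>UNIV. (Q *v axis l 1) $ i * S (P *v axis i 1) (axis l 1) w)" .
  qed
  also have "\<dots> = (\<Sum>l\<in>UNIV. \<Sum>i\<in>UNIV. (Q *v axis l 1) $ i * S (P *v axis i 1) (axis l 1) w)"
    by (rule sum.swap)
  also have "\<dots> = (\<Sum>l\<in>UNIV. S (P *v (Q *v axis l 1)) (axis l 1) w)"
  proof (rule sum.cong[OF refl])
    fix l
    have "P *v (Q *v axis l 1) = P *v (\<Sum>i\<in>UNIV. ((Q *v axis l 1)$i) *\<^sub>R axis i 1)"
      by (simp only: be)
    also have "\<dots> = (\<Sum>i\<in>UNIV. ((Q *v axis l 1)$i) *\<^sub>R (P *v axis i 1))"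
      by (simp add: linear_sum[OF matrix_vector_mul_linear] matrix_vector_mult_scaleR)
    finally show "(\<Sum>i\<in>UNIV. (Q *v axis l 1) $ i * S (P *v axis i 1) (axis l 1) w) = S (P *v (Q *v axis l 1)) (axis l 1) w"
      by (simp add: sum1 sc1)
  qed
  also have "\<dots> = 0" by (simp add: PQ zero1)
  finally show ?thesis .
qed

lemma trace_zero:
  fixes B :: "real^'n^'n"
  assumes Bs: "transpose B = B"
    and cube: "\<And>x. B *v (B *v (B *v x)) = B *v x"
    and hB: "\<And>x. S (B *v x) x x = 0"
    and hK: "\<And>h z. B *v z = 0 \<Longrightarrow> S h z z = 0"
  shows "(\<Sum>i\<in>UNIV. S (axis i 1) (axis i 1) w) = 0"
proof -
  define M1 where "M1 = B ** B + B"
  define M2 where "M2 = B ** B - B"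
  define M0 where "M0 = mat 1 - B ** B"
  have m1: "M1 *v x = B *v (B *v x) + B *v x" for x
    by (simp add: M1_def matrix_vector_mult_add_rdistrib matrix_vector_mul_assoc)
  have m2: "M2 *v x = B *v (B *v x) - B *v x" for x
    by (simp add: M2_def matrix_vector_mult_diff_rdistrib matrix_vector_mul_assoc)
  have m0: "M0 *v x = x - B *v (B *v x)" for x
    by (simp add: M0_def matrix_vector_mult_diff_rdistrib matrix_vector_mul_assoc)
  have m12: "M1 *v x + M2 *v x = 2 *\<^sub>R (B *v (B *v x))" for x
    by (simp add: m1 m2 scaleR_2)
  have dec: "x = (1/2::real) *\<^sub>R (M1 *v x) + (1/2::real) *\<^sub>R (M2 *v x) + M0 *v x" for x
  proof -
    have "(1/2::real) *\<^sub>R (M1 *v x) + (1/2::real) *\<^sub>R (M2 *v x) = B *v (B *v x)"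
      by (simp only: scaleR_add_right[symmetric] m12) simp
    then show ?thesis by (simp add: m0)
  qed
  have cube2: "B *v (B *v (B *v (B *v x))) = B *v (B *v x)" for x
    using cube[of "B *v x"] by simp
  have lin: "B *v (c *\<^sub>R x) = c *\<^sub>R (B *v x)" "B *v (x + y) = B *v x + B *v y"
    "B *v (x - y) = B *v x - B *v y" for x y c
    by (simp_all add: matrix_vector_mult_scaleR matrix_vector_right_distrib matrix_vector_mult_diff_distrib)
  have e1: "B *v (M1 *v x) = 1 *\<^sub>R (M1 *v x)" for x
    by (simp add: m1 lin cube add.commute)
  have e2: "B *v (M2 *v x) = (-1) *\<^sub>R (M2 *v x)" for x
    by (simp add: m2 lin cube)
  have e0: "B *v (M0 *v x) = 0" for x
    by (simp add: m0 lin cube)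
  have d1: "S (M1 *v x) (M1 *v x) y = 0" for x y
    by (rule eig_zero[OF hB cube e1]) simp
  have d2: "S (M2 *v x) (M2 *v x) y = 0" for x y
    by (rule eig_zero[OF hB cube e2]) simp
  have d0: "S (M0 *v x) (M0 *v x) y = 0" for x y
    using hK[OF e0, of y x] sym12 sym23 by metis
  have tadd: "transpose (X + Y) = transpose X + transpose (Y::real^'n^'n)" for X Y
    by (simp add: transpose_def vec_eq_iff)
  have tdiff: "transpose (X - Y) = transpose X - transpose (Y::real^'n^'n)" for X Y
    by (simp add: transpose_def vec_eq_iff)
  have tr: "transpose (B ** B) = B ** B" by (simp add: matrix_transpose_mul Bs)
  have t1: "transpose M1 = M1" by (simp add: M1_def tadd tr Bs)
  have t2: "transpose M2 = M2" by (simp add: M2_def tdiff tr Bs)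
  have t0: "transpose M0 = M0" by (simp add: M0_def tdiff tr)
  have p12: "M1 *v (M2 *v x) = 0" for x by (simp add: m1 m2 lin cube cube2)
  have p10: "M1 *v (M0 *v x) = 0" for x by (simp add: m1 m0 lin cube cube2)
  have p21: "M2 *v (M1 *v x) = 0" for x by (simp add: m1 m2 lin cube cube2)
  have p20: "M2 *v (M0 *v x) = 0" for x by (simp add: m2 m0 lin cube cube2)
  have p01: "M0 *v (M1 *v x) = 0" for x by (simp add: m1 m0 lin cube cube2)
  have p02: "M0 *v (M2 *v x) = 0" for x by (simp add: m2 m0 lin cube cube2)
  have ex: "S x x w = (1/4) * S (M1 *v x) (M2 *v x) w + (1/2) * S (M1 *v x) (M0 *v x) w
      + (1/4) * S (M2 *v x) (M1 *v x) w + (1/2) * S (M2 *v x) (M0 *v x) w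
      + (1/2) * S (M0 *v x) (M1 *v x) w + (1/2) * S (M0 *v x) (M2 *v x) w" for x
  proof -
    have "S x x w = S ((1/2::real) *\<^sub>R (M1 *v x) + (1/2::real) *\<^sub>R (M2 *v x) + M0 *v x)
                      ((1/2::real) *\<^sub>R (M1 *v x) + (1/2::real) *\<^sub>R (M2 *v x) + M0 *v x) w"
      using dec[of x] by simp
    then show ?thesis by (simp add: add1 add2 sc1 sc2 d1 d2 d0 field_simps)
  qed
  have "(\<Sum>i\<in>UNIV. S (axis i 1) (axis i 1) w)
     = (1/4) * (\<Sum>i\<in>UNIV. S (M1 *v axis i 1) (M2 *v axis i 1) w)
     + (1/2) * (\<Sum>i\<in>UNIV. S (M1 *v axis i 1) (M0 *v axis i 1) w)
     + (1/4) * (\<Sum>i\<in>UNIV. S (M2 *v axis i 1) (M1 *v axis i 1) w)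
     + (1/2) * (\<Sum>i\<in>UNIV. S (M2 *v axis i 1) (M0 *v axis i 1) w)
     + (1/2) * (\<Sum>i\<in>UNIV. S (M0 *v axis i 1) (M1 *v axis i 1) w)
     + (1/2) * (\<Sum>i\<in>UNIV. S (M0 *v axis i 1) (M2 *v axis i 1) w)"
    by (simp only: ex sum.distrib sum_distrib_left)
  also have "\<dots> = 0"
    by (simp add: cross_zero t1 t2 t0 p12 p10 p21 p20 p01 p02)
  finally show ?thesis .
qed


end




definition c3t where
  "c3t C \<eta> u v w a b c d = (if n_eta [a,b,c,d] = 1 then C a b c d *
     (joint 0 \<eta> a * joint u 0 b * joint v 0 c * joint w 0 d
    + joint u 0 a * joint 0 \<eta> b * joint v 0 c * joint w 0 d
    + joint u 0 a * joint v 0 b * joint 0 \<eta> c * joint w 0 d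
    + joint u 0 a * joint v 0 b * joint w 0 c * joint 0 \<eta> d) else 0)"

definition c3 where
  "c3 C \<eta> u v w = (\<Sum>a\<in>UNIV. \<Sum>b\<in>UNIV. \<Sum>c\<in>UNIV. \<Sum>d\<in>UNIV. c3t C \<eta> u v w a b c d)"

definition S3 where
  "S3 C \<eta> u v w = c3 C \<eta> u v w + c3 C \<eta> u w v + c3 C \<eta> v u w + c3 C \<eta> v w u
     + c3 C \<eta> w u v + c3 C \<eta> w v u"

lemma joint_add0: "joint (u + u') (0::real^'q) a = joint u 0 a + joint u' 0 a"
  by (cases a) (auto simp: joint_def)
lemma joint_sc0: "joint (r *\<^sub>R u) (0::real^'q) a = r * joint u 0 a"
  by (cases a) (auto simp: joint_def)

lemma c3t_add1: "c3t C \<eta> (u + u') v w a b c d = c3t C \<eta> u v w a b c d + c3t C \<eta> u' v w a b c d"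
  by (cases "n_eta [a,b,c,d] = 1") (simp_all add: c3t_def joint_add0 algebra_simps)
lemma c3t_add2: "c3t C \<eta> u (v + v') w a b c d = c3t C \<eta> u v w a b c d + c3t C \<eta> u v' w a b c d"
  by (cases "n_eta [a,b,c,d] = 1") (simp_all add: c3t_def joint_add0 algebra_simps)
lemma c3t_add3: "c3t C \<eta> u v (w + w') a b c d = c3t C \<eta> u v w a b c d + c3t C \<eta> u v w' a b c d"
  by (cases "n_eta [a,b,c,d] = 1") (simp_all add: c3t_def joint_add0 algebra_simps)
lemma c3t_sc1: "c3t C \<eta> (r *\<^sub>R u) v w a b c d = r * c3t C \<eta> u v w a b c d"
  by (cases "n_eta [a,b,c,d] = 1") (simp_all add: c3t_def joint_sc0 algebra_simps)
lemma c3t_sc2: "c3t C \<eta> u (r *\<^sub>R v) w a b c d = r * c3t C \<eta> u v w a b c d"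
  by (cases "n_eta [a,b,c,d] = 1") (simp_all add: c3t_def joint_sc0 algebra_simps)
lemma c3t_sc3: "c3t C \<eta> u v (r *\<^sub>R w) a b c d = r * c3t C \<eta> u v w a b c d"
  by (cases "n_eta [a,b,c,d] = 1") (simp_all add: c3t_def joint_sc0 algebra_simps)

lemma c3_lin1: "linear (\<lambda>u. c3 C \<eta> u v w)"
  by (rule linearI) (simp_all add: c3_def c3t_add1 c3t_sc1 sum.distrib sum_distrib_left)
lemma c3_lin2: "linear (\<lambda>v. c3 C \<eta> u v w)"
  by (rule linearI) (simp_all add: c3_def c3t_add2 c3t_sc2 sum.distrib sum_distrib_left)
lemma c3_lin3: "linear (\<lambda>w. c3 C \<eta> u v w)"
  by (rule linearI) (simp_all add: c3_def c3t_add3 c3t_sc3 sum.distrib sum_distrib_left)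

lemma S3_trisym: "trisym (S3 C \<eta>)"
  apply (rule trisym.intro)
  subgoal unfolding S3_def by (intro linear_compose_add c3_lin1 c3_lin2 c3_lin3)
  subgoal by (simp add: S3_def algebra_simps)
  subgoal by (simp add: S3_def algebra_simps)
  done

lemma th1_c3: "th C 1 \<xi> \<eta> = c3 C \<eta> \<xi> \<xi> \<xi>"
  unfolding th_def c3_def
  apply (intro sum.cong refl)
  subgoal for a b c d
    by (cases a; cases b; cases c; cases d) (simp_all add: c3t_def joint_def n_eta_def)
  done

lemma dth1_c3: "dth C 1 \<xi> \<eta> h 0 = c3 C \<eta> h \<xi> \<xi> + c3 C \<eta> \<xi> h \<xi> + c3 C \<eta> \<xi> \<xi> h"
  unfolding dth_def c3_def sum.distrib[symmetric]
  apply (intro sum.cong refl)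
  subgoal for a b c d
    by (cases a; cases b; cases c; cases d) (simp_all add: c3t_def dQt_def joint_def n_eta_def algebra_simps)
  done

lemma c3_eta0:
  fixes C :: "('p::finite + 'q::finite) \<Rightarrow> ('p + 'q) \<Rightarrow> ('p + 'q) \<Rightarrow> ('p + 'q) \<Rightarrow> real"
    and u v w :: "real^'p"
  shows "c3 C (0::real^'q) u v w = 0"
proof -
  have j0: "joint (0::real^'p) (0::real^'q) a = 0" for a by (cases a) (auto simp: joint_def)
  show ?thesis unfolding c3_def
    apply (intro sum.neutral ballI)
    subgoal for a b c d
      by (cases a; cases b; cases c; cases d) (simp_all add: c3t_def joint_def)
    done
qed




lemma deriv2_cubic: "deriv (deriv (\<lambda>r::real. a + b*r + c*r^2 + d*r^3)) 0 = 2*c"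
proof -
  have "deriv (\<lambda>r::real. a + b*r + c*r^2 + d*r^3) = (\<lambda>r. b + 2*c*r + 3*d*r^2)"
  proof
    fix r :: real
    show "deriv (\<lambda>r::real. a + b*r + c*r^2 + d*r^3) r = b + 2*c*r + 3*d*r^2"
      by (rule DERIV_imp_deriv) (auto intro!: derivative_eq_intros simp: power2_eq_square)
  qed
  moreover have "deriv (\<lambda>r::real. b + 2*c*r + 3*d*r^2) 0 = 2*c"
    by (rule DERIV_imp_deriv) (auto intro!: derivative_eq_intros)
  ultimately show ?thesis by simp
qed

context trisym begin

lemma line3: "S (x + r *\<^sub>R e) (x + r *\<^sub>R e) (x + r *\<^sub>R e)
   = S x x x + 3 * r * S e x x + 3 * r^2 * S e e x + r^3 * S e e e"
proof -
  have s1: "S x e x = S e x x" "S x x e = S e x x" "S e x e = S e e x" "S x e e = S e e x"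
    using sym12 sym23 by metis+
  show ?thesis
    by (simp add: add1 add2 add3 sc1 sc2 sc3 s1 algebra_simps power2_eq_square power3_eq_cube)
qed

lemma coord1: "S x v w = (\<Sum>i\<in>UNIV. x$i * S (axis i 1) v w)"
proof -
  have be: "(\<Sum>i\<in>UNIV. (x$i) *\<^sub>R axis i 1) = x"
    using basis_expansion[of x] by (simp add: scalar_mult_eq_scaleR)
  have "S x v w = S (\<Sum>i\<in>UNIV. (x$i) *\<^sub>R axis i 1) v w" by (simp only: be)
  also have "\<dots> = (\<Sum>i\<in>UNIV. x$i * S (axis i 1) v w)" by (simp add: sum1 sc1)
  finally show ?thesis .
qed

end

lemma S3_diag: "S3 C \<eta> x x x = 6 * c3 C \<eta> x x x"
  by (simp add: S3_def)

lemma dT_S3: "dth C 1 \<xi> \<eta> h 0 = S3 C \<eta> h \<xi> \<xi> / 2"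
  unfolding dth1_c3 S3_def by simp

lemma part31_th: "part31 C \<zeta> \<eta> = th C 1 \<zeta> \<eta>"
  by (simp add: part31_def th_def)

lemma lap_S3: "laplacian (\<lambda>\<zeta>. part31 C \<zeta> \<eta>) \<xi> = (\<Sum>i\<in>UNIV. S3 C \<eta> (axis i 1) (axis i 1) \<xi>)"
proof -
  interpret trisym "S3 C \<eta>" by (rule S3_trisym)
  have "deriv (deriv (\<lambda>r. part31 C (\<xi> + r *\<^sub>R axis i 1) \<eta>)) 0 = S3 C \<eta> (axis i 1) (axis i 1) \<xi>" for i
  proof -
    have eq: "(\<lambda>r. part31 C (\<xi> + r *\<^sub>R axis i 1) \<eta>) = (\<lambda>r. S3 C \<eta> \<xi> \<xi> \<xi> / 6 + (S3 C \<eta> (axis i 1) \<xi> \<xi> / 2) * r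
        + (S3 C \<eta> (axis i 1) (axis i 1) \<xi> / 2) * r^2 + (S3 C \<eta> (axis i 1) (axis i 1) (axis i 1) / 6) * r^3)"
    proof
      fix r
      have "part31 C (\<xi> + r *\<^sub>R axis i 1) \<eta> = S3 C \<eta> (\<xi> + r *\<^sub>R axis i 1) (\<xi> + r *\<^sub>R axis i 1) (\<xi> + r *\<^sub>R axis i 1) / 6"
        unfolding part31_th th1_c3 S3_diag by simp
      then show "part31 C (\<xi> + r *\<^sub>R axis i 1) \<eta> = S3 C \<eta> \<xi> \<xi> \<xi> / 6 + (S3 C \<eta> (axis i 1) \<xi> \<xi> / 2) * r
        + (S3 C \<eta> (axis i 1) (axis i 1) \<xi> / 2) * r^2 + (S3 C \<eta> (axis i 1) (axis i 1) (axis i 1) / 6) * r^3"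
        by (simp add: line3 algebra_simps)
    qed
    show ?thesis unfolding eq deriv2_cubic by simp
  qed
  then show ?thesis by (simp add: laplacian_def)
qed

lemma diag_mult:
  assumes "diagonal_matrix D"
  shows "(D *v y) $ i = D $ i $ i * y $ i"
proof -
  have "(D *v y) $ i = (\<Sum>j\<in>UNIV. D $ i $ j * y $ j)" by (simp add: matrix_vector_mult_def)
  also have "\<dots> = (\<Sum>j\<in>UNIV. if j = i then D $ i $ i * y $ i else 0)"
    using assms by (intro sum.cong) (auto simp: diagonal_matrix_def)
  also have "\<dots> = D $ i $ i * y $ i" by simp
  finally show ?thesis .
qed




lemma cube_from_spec:
  fixes M D :: "real^'n::finite^'n"
  assumes dD: "diagonal_matrix D" and ent: "\<forall>i. D $ i $ i \<in> {l, - l, 0}"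
    and sim: "similar_matrix M D"
  shows "M *v (M *v (M *v x)) = l^2 *\<^sub>R (M *v x)"
proof -
  obtain P where iP: "invertible P" and MP: "M = matrix_inv P ** D ** P"
    using sim unfolding similar_matrix_def by blast
  define Q where "Q = matrix_inv P"
  have "P ** Q = mat 1 \<and> Q ** P = mat 1"
    using iP unfolding invertible_def Q_def matrix_inv_def by (rule someI_ex)
  then have PQ: "P *v (Q *v y) = y" for y by (simp add: matrix_vector_mul_assoc)
  have Mv: "M *v y = Q *v (D *v (P *v y))" for y
    by (simp add: MP Q_def matrix_vector_mul_assoc matrix_mul_assoc)
  have D3: "D *v (D *v (D *v y)) = l^2 *\<^sub>R (D *v y)" for y
  proof -
    have "(D $ i $ i)^3 = l^2 * D $ i $ i" for i using ent[rule_format, of i]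
      by (auto simp: power2_eq_square power3_eq_cube)
    then show ?thesis
      by (simp add: vec_eq_iff diag_mult[OF dD] power2_eq_square power3_eq_cube algebra_simps)
  qed
  show ?thesis by (simp add: Mv PQ D3 matrix_vector_mult_scaleR)
qed

theorem proposition3p5:
  fixes A :: "'q::finite \<Rightarrow> real^'p::finite^'p"
    and C :: "('p + 'q) \<Rightarrow> ('p + 'q) \<Rightarrow> ('p + 'q) \<Rightarrow> ('p + 'q) \<Rightarrow> real"
    and \<nu> :: nat
    and f :: "(real^'p) \<times> (real^'q) \<times> real \<Rightarrow> real"
  assumes q2: "CARD('q) \<ge> 2"
    and symm: "\<forall>i. transpose (A i) = A i"
    and spec: "\<forall>\<eta>::real^'q. \<eta> \<noteq> 0 \<longrightarrow>
      (\<exists>D. diagonal_matrix D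
         \<and> (\<forall>i. D $ i $ i \<in> {norm \<eta>, - norm \<eta>, 0})
         \<and> card {i. D $ i $ i = norm \<eta>} = \<nu>
         \<and> card {i. D $ i $ i = - norm \<eta>} = \<nu>
         \<and> similar_matrix (A_eta A \<eta>) D)"
    and f_def: "f = (\<lambda>(\<xi>, \<eta>, t). t ^ 4 + 2 * (norm \<xi> ^ 2 - 3 * norm \<eta> ^ 2) * t ^ 2
                 + 8 * (\<xi> \<bullet> (A_eta A \<eta> *v \<xi>)) * t + quartic_form C \<xi> \<eta>)"
    and eikonal: "\<forall>x. \<exists>g. (f has_derivative (\<lambda>h. g \<bullet> h)) (at x)
                          \<and> norm g ^ 2 = 16 * norm x ^ 6"
  shows "\<forall>\<xi> \<eta>. laplacian (\<lambda>\<zeta>. part31 C \<zeta> \<eta>) \<xi> = 0"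
proof (intro allI)
  fix \<xi> :: "real^'p" and \<eta> :: "real^'q"
  have ff: "f = fF A C" unfolding f_def fF_def ..
  have eik: "\<forall>x. \<exists>g. (fF A C has_derivative (\<lambda>h. g \<bullet> h)) (at x) \<and> norm g ^ 2 = 16 * norm x ^ 6"
    using eikonal unfolding ff .
  note H = eik_identity[OF symm eik]
  interpret trisym "S3 C \<eta>" by (rule S3_trisym)
  show "laplacian (\<lambda>\<zeta>. part31 C \<zeta> \<eta>) \<xi> = 0"
  proof (cases "\<eta> = 0")
    case True
    then show ?thesis by (simp add: lap_S3 S3_def c3_eta0)
  next
    case False
    define l where "l = norm \<eta>"
    have lpos: "l > 0" using False by (simp add: l_def)
    define M where "M = A_eta A \<eta>"
    obtain D where dD: "diagonal_matrix D" and ent: "\<forall>i. D $ i $ i \<in> {l, - l, 0}"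
      and sim: "similar_matrix M D"
      using spec False unfolding l_def M_def by blast
    have cubeM: "M *v (M *v (M *v x)) = l^2 *\<^sub>R (M *v x)" for x
      by (rule cube_from_spec[OF dD ent sim])
    define B where "B = (1/l) *\<^sub>R M"
    have Bv: "B *v x = (1/l) *\<^sub>R (M *v x)" for x by (simp add: B_def scaleR_mat_vec)
    have Bs: "transpose B = B"
      by (simp add: B_def transpose_scalar M_def A_eta_symm[OF symm])
    have cube: "B *v (B *v (B *v x)) = B *v x" for x
      using lpos by (simp add: Bv matrix_vector_mult_scaleR cubeM power2_eq_square)
    have Sx: "S3 C \<eta> (axis i 1) x x = 2 * dth C 1 x \<eta> (axis i 1) 0" for i x
      unfolding dT_S3 by simp
    have hB: "S3 C \<eta> (B *v x) x x = 0" for x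
    proof -
      have "S3 C \<eta> (M *v x) x x = (\<Sum>i\<in>UNIV. (M *v x) $ i * S3 C \<eta> (axis i 1) x x)"
        by (rule coord1)
      also have "\<dots> = 2 * (\<Sum>i\<in>UNIV. (A_eta A \<eta> *v x) $ i * dth C 1 x \<eta> (axis i 1) 0)"
        by (simp add: Sx M_def sum_distrib_left algebra_simps)
      also have "\<dots> = 0" using B_identity[OF H] by simp
      finally show ?thesis by (simp add: Bv sc1)
    qed
    have hK: "S3 C \<eta> h z z = 0" if "B *v z = 0" for h z
    proof -
      have Mz: "A_eta A \<eta> *v z = 0" using that lpos by (simp add: Bv M_def)
      have c: "S3 C \<eta> h z z = (\<Sum>i\<in>UNIV. h $ i * S3 C \<eta> (axis i 1) z z)" by (rule coord1)
      have kk: "\<And>i. dth C 1 z \<eta> (axis i 1) 0 = 0" using key_kernel[OF H Mz] by blast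
      have "(\<Sum>i\<in>UNIV. h $ i * S3 C \<eta> (axis i 1) z z) = 0" unfolding Sx kk by simp
      then show ?thesis using c by simp
    qed
    have "(\<Sum>i\<in>UNIV. S3 C \<eta> (axis i 1) (axis i 1) \<xi>) = 0"
      by (rule trace_zero[OF Bs cube hB hK])
    then show ?thesis by (simp add: lap_S3)
  qed
qed



end
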